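(* Let $S \subseteq \mathbb{R}^n$ be nonempty, closed and convex, and let $F = (F_1,\dots,F_m)^\top\colon S \to\mathbb{R}^m$ with each $F_i$ convex. For $\ell > 0$ define $u_\ell(x) := \max_{y \in S}\min_{i=1,\dots,m}\{F_i(x) - F_i(y) - \frac{\ell}{2}\|x-y\|^2\}$, $x\in S$. Let $\ell>0$ and let $r$ be any scalar with $r \ge \ell$. Then \[ u_r(x) \le u_\ell(x) \le \frac{r}{\ell} u_r(x) \quad \text{for all } x \in S. \] *)

theory Defs
  imports "HOL-Analysis.Analysis"
begin

text \<open>The components of F = (F_1,...,F_m) are
  modelled as F :: nat => 'a => real with indices 1..m. The paper's max over y in S is
  rendered as the supremum over y in S (it coincides with the max whenever the max exists).\<close>

definition merit_u :: "'a::euclidean_space set \<Rightarrow> (nat \<Rightarrow> 'a \<Rightarrow> real) \<Rightarrow> nat \<Rightarrow> real \<Rightarrow> 'a \<Rightarrow> real" where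
  "merit_u S F m l x =
     (SUP y\<in>S. Min ((\<lambda>i. F i x - F i y - l / 2 * (norm (x - y))\<^sup>2) ` {1..m}))"

end

theory Submission
  imports Defs
begin

lemma convex_affine_minorant:
  fixes S :: "'a::euclidean_space set" and f :: "'a \<Rightarrow> real"
  assumes cS: "convex S" and ne: "S \<noteq> {}" and cf: "convex_on S f"
  obtains g :: 'a and b :: real where "\<And>y. y \<in> S \<Longrightarrow> g \<bullet> y + b \<le> f y"
proof -
  obtain c where c: "c \<in> rel_interior S"
    using rel_interior_eq_empty[OF cS] ne by blast
  then obtain e where cS': "c \<in> S" and e: "e > 0" and eb: "ball c e \<inter> affine hull S \<subseteq> S"
    using mem_rel_interior_ball by blast
  define E where "E = epigraph S f"
  define z where "z = (c, f c - 1)"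
  have zE: "z \<notin> E" unfolding E_def z_def by (simp add: mem_epigraph)
  have cE: "convex E" unfolding E_def using cf convex_epigraph by blast
  have neE: "E \<noteq> {}" unfolding E_def using cS' mem_epigraph[of c "f c" S f] by auto
  obtain a \<beta> where a1: "z + a \<in> affine hull (insert z E)" and a2: "a \<noteq> 0"
    and a3: "a \<bullet> z \<le> \<beta>" and a4: "\<And>p. p \<in> E \<Longrightarrow> a \<bullet> p \<ge> \<beta>"
    using separating_hyperplane_set_point_inaff[OF cE neE zE] by blast
  obtain g t where a: "a = (g, t)" by (cases a)
  have t0: "t \<ge> 0"
  proof -
    have "(c, f c) \<in> E" unfolding E_def using cS' by (simp add: mem_epigraph)
    from a4[OF this] a3 show ?thesis unfolding a z_def by (simp add: algebra_simps)
  qed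
  define P where "P = {p :: 'a \<times> real. fst p \<in> affine hull S}"
  have hA: "\<forall>x\<in>affine hull S. \<forall>y\<in>affine hull S. \<forall>u v. u + v = 1 \<longrightarrow> u *\<^sub>R x + v *\<^sub>R y \<in> affine hull S"
    using affine_affine_hull[of S] unfolding affine_def by blast
  have affP: "affine P" using hA unfolding P_def by (subst affine_def) auto
  have "insert z E \<subseteq> P" unfolding P_def z_def E_def using cS'
    by (auto simp: epigraph_def hull_inc)
  then have "affine hull (insert z E) \<subseteq> P" using affP by (simp add: hull_minimal)
  with a1 have cg: "c + g \<in> affine hull S" unfolding P_def a z_def by auto
  have tpos: "t > 0"
  proof (rule ccontr)
    assume "\<not> t > 0"
    then have t: "t = 0" using t0 by simp
    have gy: "g \<bullet> y \<ge> g \<bullet> c" if "y \<in> S" for y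
    proof -
      have "(y, f y) \<in> E" unfolding E_def using that by (simp add: mem_epigraph)
      from a4[OF this] a3 show ?thesis unfolding a z_def t by simp
    qed
    define \<epsilon> where "\<epsilon> = e / (2 * (norm g + 1))"
    have ep: "\<epsilon> > 0" unfolding \<epsilon>_def using e norm_ge_zero[of g] by (intro divide_pos_pos) (linarith, simp add: add_nonneg_pos)
    define y where "y = (1 + \<epsilon>) *\<^sub>R c + (- \<epsilon>) *\<^sub>R (c + g)"
    have yc: "y = c - \<epsilon> *\<^sub>R g" unfolding y_def by (simp add: algebra_simps)
    have "y \<in> affine hull S"
      unfolding y_def using hA[rule_format, OF hull_inc[OF cS'] cg, of "1 + \<epsilon>" "- \<epsilon>"] by simp
    moreover have "dist c y < e"
    proof -
      have "dist c y = \<epsilon> * norm g" unfolding yc dist_norm using ep by simp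
      also have "\<dots> < e"
      proof -
        have n1: "norm g / (2 * (norm g + 1)) < 1"
          by (simp add: divide_less_eq) (insert norm_ge_zero[of g], linarith)
        have "\<epsilon> * norm g = e * (norm g / (2 * (norm g + 1)))" unfolding \<epsilon>_def by simp
        also have "\<dots> < e * 1" using e n1 by (intro mult_strict_left_mono) auto
        finally show ?thesis by simp
      qed
      finally show ?thesis .
    qed
    ultimately have "y \<in> S" using eb by auto
    from gy[OF this] have "\<epsilon> * (g \<bullet> g) \<le> 0" unfolding yc by (simp add: inner_diff_right)
    then have "g \<bullet> g \<le> 0" using ep by (simp add: mult_le_0_iff)
    then have "g = 0" by (metis inner_gt_zero_iff not_le)
    with t a a2 show False by (simp add: zero_prod_def)
  qed
  show ?thesis
  proof (rule that[of "- (1/t) *\<^sub>R g" "\<beta> / t"])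
    fix y assume "y \<in> S"
    then have "(y, f y) \<in> E" unfolding E_def by (simp add: mem_epigraph)
    from a4[OF this] have "g \<bullet> y + t * f y \<ge> \<beta>" unfolding a by simp
    then show "(- (1/t) *\<^sub>R g) \<bullet> y + \<beta> / t \<le> f y" using tpos
      by (simp add: field_simps)
  qed
qed

lemma quad_bound:
  fixes K n l :: real assumes "l > 0"
  shows "K * n - l / 2 * n\<^sup>2 \<le> K\<^sup>2 / (2 * l)"
proof -
  have "0 \<le> (l * n - K)\<^sup>2" by simp
  then have "2 * l * (K * n - l / 2 * n\<^sup>2) \<le> K\<^sup>2"
    by (simp add: power2_eq_square algebra_simps)
  then show ?thesis using assms by (simp add: field_simps)
qed

lemma phi_bdd:
  fixes S :: "'a::euclidean_space set" and F :: "nat \<Rightarrow> 'a \<Rightarrow> real"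
  assumes cS: "convex S" and ne: "S \<noteq> {}" and m: "m \<ge> 1"
    and cf: "convex_on S (F 1)" and l: "l > 0"
  shows "bdd_above ((\<lambda>y. Min ((\<lambda>i. F i x - F i y - l / 2 * (norm (x - y))\<^sup>2) ` {1..m})) ` S)"
proof -
  obtain g b where gb: "\<And>y. y \<in> S \<Longrightarrow> g \<bullet> y + b \<le> F 1 y"
    using convex_affine_minorant[OF cS ne cf] by blast
  show ?thesis unfolding bdd_above_def
  proof (intro exI ballI)
    fix v assume "v \<in> (\<lambda>y. Min ((\<lambda>i. F i x - F i y - l / 2 * (norm (x - y))\<^sup>2) ` {1..m})) ` S"
    then obtain y where y: "y \<in> S" and v: "v = Min ((\<lambda>i. F i x - F i y - l / 2 * (norm (x - y))\<^sup>2) ` {1..m})"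
      by blast
    have "v \<le> F 1 x - F 1 y - l / 2 * (norm (x - y))\<^sup>2"
      unfolding v using m by (intro Min_le) auto
    also have "\<dots> \<le> F 1 x - g \<bullet> y - b - l / 2 * (norm (x - y))\<^sup>2" using gb[OF y] by simp
    also have "g \<bullet> y = g \<bullet> x + g \<bullet> (y - x)" by (simp add: inner_diff_right)
    also have "g \<bullet> (y - x) \<ge> - (norm g * norm (x - y))"
    proof -
      have "\<bar>g \<bullet> (y - x)\<bar> \<le> norm g * norm (y - x)" by (rule Cauchy_Schwarz_ineq2)
      then show ?thesis by (simp add: norm_minus_commute)
    qed
    then have "F 1 x - (g \<bullet> x + g \<bullet> (y - x)) - b - l / 2 * (norm (x - y))\<^sup>2
        \<le> F 1 x - g \<bullet> x - b + (norm g * norm (x - y) - l / 2 * (norm (x - y))\<^sup>2)" by simp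
    also have "\<dots> \<le> F 1 x - g \<bullet> x - b + (norm g)\<^sup>2 / (2 * l)"
      using quad_bound[OF l, of "norm g" "norm (x - y)"] by simp
    finally show "v \<le> F 1 x - g \<bullet> x - b + (norm g)\<^sup>2 / (2 * l)" .
  qed
qed

lemma Min_image_mono:
  fixes f g :: "nat \<Rightarrow> real"
  assumes "finite I" "I \<noteq> {}" "\<And>i. i \<in> I \<Longrightarrow> f i \<le> g i"
  shows "Min (f ` I) \<le> Min (g ` I)"
proof -
  have "Min (g ` I) \<in> g ` I" using assms by simp
  then obtain j where j: "j \<in> I" "Min (g ` I) = g j" by auto
  have "Min (f ` I) \<le> f j" using assms j by simp
  with assms(3)[OF j(1)] j(2) show ?thesis by simp
qed

theorem corollary4p3:
  fixes S :: "'a::euclidean_space set" and F :: "nat \<Rightarrow> 'a \<Rightarrow> real"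
    and m :: nat and l r :: real
  assumes "S \<noteq> {}" and "closed S" and "convex S"
    and "m \<ge> 1"
    and "\<And>i. i \<in> {1..m} \<Longrightarrow> convex_on S (F i)"
    and "l > 0" and "r \<ge> l"
  shows "\<forall>x\<in>S. merit_u S F m r x \<le> merit_u S F m l x \<and>
                 merit_u S F m l x \<le> r / l * merit_u S F m r x"
proof
  fix x assume xS: "x \<in> S"
  define phi where "phi k y = Min ((\<lambda>i. F i x - F i y - k / 2 * (norm (x - y))\<^sup>2) ` {1..m})" for k y
  have mu: "merit_u S F m k x = (SUP y\<in>S. phi k y)" for k unfolding merit_u_def phi_def by simp
  have cf1: "convex_on S (F 1)" using assms(4,5) by simp
  have rpos: "r > 0" using assms(6,7) by simp
  have bl: "bdd_above (phi l ` S)" unfolding phi_def using phi_bdd[where F=F and x=x, OF assms(3,1,4) cf1 assms(6)] .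
  have br: "bdd_above (phi r ` S)" unfolding phi_def using phi_bdd[where F=F and x=x, OF assms(3,1,4) cf1 rpos] .
  have fin: "finite {1..m}" "{1..m} \<noteq> {}" using assms(4) by auto
  have "(SUP y\<in>S. phi r y) \<le> (SUP y\<in>S. phi l y)"
  proof (rule cSUP_mono[OF assms(1) bl])
    fix y assume "y \<in> S"
    have "phi r y \<le> phi l y" unfolding phi_def
      using assms(7) by (intro Min_image_mono[OF fin]) (auto intro!: mult_right_mono)
    then show "\<exists>y'\<in>S. phi r y \<le> phi l y'" using \<open>y \<in> S\<close> by blast
  qed
  moreover have "(SUP y\<in>S. phi l y) \<le> r / l * (SUP y\<in>S. phi r y)"
  proof (rule cSUP_least[OF assms(1)])
    fix y assume yS: "y \<in> S"
    define t where "t = l / r"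
    have t: "0 < t" "t \<le> 1" unfolding t_def using assms(6,7) by auto
    define z where "z = (1 - t) *\<^sub>R x + t *\<^sub>R y"
    have zS: "z \<in> S" unfolding z_def using assms(3) xS yS t by (intro convexD) auto
    have xz: "x - z = t *\<^sub>R (x - y)" unfolding z_def by (simp add: algebra_simps)
    have "t * phi l y \<le> phi r z"
    proof -
      have "t * phi l y = Min ((\<lambda>i. t * (F i x - F i y - l / 2 * (norm (x - y))\<^sup>2)) ` {1..m})"
        unfolding phi_def using fin t
        by (subst mono_Min_commute[where f = "\<lambda>v. t * v"]) (auto simp: mono_def image_image)
      also have "\<dots> \<le> phi r z" unfolding phi_def
      proof (rule Min_image_mono[OF fin])
        fix i assume i: "i \<in> {1..m}"
        have "F i z \<le> (1 - t) * F i x + t * F i y"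
          unfolding z_def using convex_onD[OF assms(5)[OF i], of t x y] t xS yS
          by (simp add: algebra_simps)
        moreover have "r / 2 * (norm (x - z))\<^sup>2 = t * (l / 2 * (norm (x - y))\<^sup>2)"
        proof -
          have "norm (x - z) = t * norm (x - y)" unfolding xz using t by simp
          moreover have "r * t = l" unfolding t_def using rpos by simp
          ultimately show ?thesis by (simp add: power2_eq_square algebra_simps)
        qed
        ultimately show "t * (F i x - F i y - l / 2 * (norm (x - y))\<^sup>2)
            \<le> F i x - F i z - r / 2 * (norm (x - z))\<^sup>2"
          by (simp add: algebra_simps)
      qed
      finally show ?thesis .
    qed
    also have "phi r z \<le> (SUP y\<in>S. phi r y)" using br zS by (rule cSUP_upper2) simp
    finally have "phi l y \<le> (SUP y\<in>S. phi r y) / t" using t by (simp add: field_simps)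
    then show "phi l y \<le> r / l * (SUP y\<in>S. phi r y)" unfolding t_def by (simp add: mult.commute)
  qed
  ultimately show "merit_u S F m r x \<le> merit_u S F m l x \<and>
                 merit_u S F m l x \<le> r / l * merit_u S F m r x" unfolding mu by simp
qed

end
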